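(* Let $m\in\mathbb N$. Let $\mathbf X=(X_1,\dots,X_n)$ be (possibly dependent) component lifetimes and $\mathbf Y_i=(Y_{i1},\dots,Y_{in})$, $i=1,\dots,m$, be vectors of spare lifetimes, all $X_j$ and $Y_{ij}$ identically distributed as $X$. Let $T_C=\tau(\mathbf Z)$, where $\mathbf Z=(Z_1,\dots,Z_n)$, $Z_j=\max\{X_j,Y_{1j},\dots,Y_{mj}\}$ with $X_j,Y_{1j},\dots,Y_{mj}$ independent (active redundancy at component level), and let $T_S=\max\{\tau(\mathbf X),\tau(\mathbf Y_1),\dots,\tau(\mathbf Y_m)\}$ with $\tau(\mathbf X),\tau(\mathbf Y_1),\dots,\tau(\mathbf Y_m)$ independent (active redundancy at system level), where $\tau$ is a coherent structure and $\tau(\mathbf X),\tau(\mathbf Y_i),\tau(\mathbf Z)$ all have the same domination function $h$; thus $\bar F_{T_C}(x)=h\big(1-(1-\bar F_X(x))^{m+1}\big)$ and $\bar F_{T_S}(x)=1-\big(1-h(\bar F_X(x))\big)^{m+1}$. Then $T_S\underset{c}{\prec}T_C$ (resp. $T_S\underset{c}{\succ}T_C$) holds if and only if $$\left(\frac{(1-h(p))^{m}h'(p)}{1-(1-h(p))^{m+1}}\right)\left(\frac{h\big(1-(1-p)^{m+1}\big)}{(1-p)^{m}h'\big(1-(1-p)^{m+1}\big)}\right)$$ is decreasing (resp. increasing) in $p\in(0,1)$.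
   Context: All random variables are non-negative and absolutely continuous with support $[0,\infty)$. For a random variable $W$: density $f_W$, survival $\bar F_W$, hazard rate $r_W=f_W/\bar F_W$. $U\underset{c}{\prec}V$ means $r_U(x)/r_V(x)$ is increasing in $x\ge0$; $U\underset{c}{\succ}V$ means $V\underset{c}{\prec}U$. The domination function $h:[0,1]\to[0,1]$ of a coherent system whose components have common marginal survival function $\bar G$ is the function (depending on structure and survival copula) with system reliability $h(\bar G(x))$; it is increasing, continuous, $h(0)=0$, $h(1)=1$, assumed differentiable. "Increasing" means non-decreasing, "decreasing" means non-increasing. *)

theory Defs
  imports "HOL-Analysis.Analysis"
begin

text \<open>Lifetime distributions are represented by their survival functions.\<close>

definition density_of :: "(real \<Rightarrow> real) \<Rightarrow> real \<Rightarrow> real" where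
  "density_of S x = - deriv S x"

definition hazard :: "(real \<Rightarrow> real) \<Rightarrow> real \<Rightarrow> real" where
  "hazard S x = density_of S x / S x"

text \<open>U is smaller than V in the convex transform (hazard-ratio) order:
  the ratio of hazard rates is increasing on the positive half-line.\<close>

definition c_less :: "(real \<Rightarrow> real) \<Rightarrow> (real \<Rightarrow> real) \<Rightarrow> bool" where
  "c_less SU SV \<longleftrightarrow>
     (\<forall>x y. 0 < x \<longrightarrow> x \<le> y \<longrightarrow> hazard SU x / hazard SV x \<le> hazard SU y / hazard SV y)"

definition lifetime_survival :: "(real \<Rightarrow> real) \<Rightarrow> bool" where
  "lifetime_survival S \<longleftrightarrow>
     (\<forall>x\<le>0. S x = 1) \<and> isCont S 0 \<and> (S \<longlongrightarrow> 0) at_top \<and>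
     (\<forall>x>0. S differentiable (at x) \<and> deriv S x < 0)"

definition domination_function :: "(real \<Rightarrow> real) \<Rightarrow> bool" where
  "domination_function h \<longleftrightarrow>
     h ` {0..1} \<subseteq> {0..1} \<and> mono_on {0..1} h \<and> continuous_on {0..1} h \<and>
     h 0 = 0 \<and> h 1 = 1 \<and> (\<forall>p\<in>{0..1}. h differentiable (at p within {0..1}))"

definition surv_component_redundancy :: "(real \<Rightarrow> real) \<Rightarrow> nat \<Rightarrow> (real \<Rightarrow> real) \<Rightarrow> real \<Rightarrow> real" where
  "surv_component_redundancy h m F x = h (1 - (1 - F x) ^ (m + 1))"

definition surv_system_redundancy :: "(real \<Rightarrow> real) \<Rightarrow> nat \<Rightarrow> (real \<Rightarrow> real) \<Rightarrow> real \<Rightarrow> real" where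
  "surv_system_redundancy h m F x = 1 - (1 - h (F x)) ^ (m + 1)"

definition ratio_expr :: "(real \<Rightarrow> real) \<Rightarrow> nat \<Rightarrow> real \<Rightarrow> real" where
  "ratio_expr h m p =
     ((1 - h p) ^ m * deriv h p / (1 - (1 - h p) ^ (m + 1))) *
     (h (1 - (1 - p) ^ (m + 1)) / ((1 - p) ^ m * deriv h (1 - (1 - p) ^ (m + 1))))"

end

theory Submission
  imports Defs
begin

lemma F_props:
  assumes "lifetime_survival F"
  shows F_dec: "\<And>x y. 0 < x \<Longrightarrow> x < y \<Longrightarrow> F y < F x"
    and F_der: "\<And>x. 0 < x \<Longrightarrow> (F has_real_derivative deriv F x) (at x) \<and> deriv F x < 0"
    and F_rng: "\<And>x. 0 < x \<Longrightarrow> 0 < F x \<and> F x < 1"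
    and F_surj: "\<And>q. 0 < q \<Longrightarrow> q < 1 \<Longrightarrow> \<exists>x>0. F x = q"
proof -
  have one: "\<forall>x\<le>0. F x = 1" and c0: "isCont F 0" and lim: "(F \<longlongrightarrow> 0) at_top"
    and d: "\<forall>x>0. F differentiable (at x) \<and> deriv F x < 0"
    using assms unfolding lifetime_survival_def by auto
  show der: "\<And>x. 0 < x \<Longrightarrow> (F has_real_derivative deriv F x) (at x) \<and> deriv F x < 0"
    using d DERIV_deriv_iff_real_differentiable by blast
  have cont: "\<And>x. 0 \<le> x \<Longrightarrow> isCont F x"
  proof -
    fix x :: real assume "0 \<le> x"
    show "isCont F x"
    proof (cases "x = 0")
      case True then show ?thesis using c0 by simp
    next
      case False then have "0 < x" using \<open>0 \<le> x\<close> by simp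
      then show ?thesis using der DERIV_isCont by blast
    qed
  qed
  have dec0: "\<And>x y. 0 \<le> x \<Longrightarrow> x < y \<Longrightarrow> F y < F x"
  proof -
    fix x y :: real assume "0 \<le> x" "x < y"
    show "F y < F x"
      apply (rule DERIV_neg_imp_decreasing_open[OF \<open>x < y\<close>])
      using der \<open>0 \<le> x\<close> apply (meson le_less_trans)
      using cont \<open>0 \<le> x\<close> by (intro continuous_at_imp_continuous_on) auto
  qed
  show "\<And>x y. 0 < x \<Longrightarrow> x < y \<Longrightarrow> F y < F x" using dec0 by simp
  show "\<And>x. 0 < x \<Longrightarrow> 0 < F x \<and> F x < 1"
  proof
    fix x :: real assume x: "0 < x"
    show "F x < 1" using dec0[of 0 x] x one by simp
    have ev: "eventually (\<lambda>z. F z \<le> F (x+1)) at_top"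
      using eventually_ge_at_top[of "x+1"] 
    proof eventually_elim
      case (elim z)
      show ?case
      proof (cases "z = x+1")
        case False
        then have "x+1 < z" using elim by simp
        then show ?thesis using dec0[of "x+1" z] x by simp
      qed simp
    qed
    have "0 \<le> F (x+1)" using tendsto_upperbound[OF lim ev] by simp
    then show "0 < F x" using dec0[of x "x+1"] x by simp
  qed
  show "\<And>q. 0 < q \<Longrightarrow> q < 1 \<Longrightarrow> \<exists>x>0. F x = q"
  proof -
    fix q :: real assume q: "0 < q" "q < 1"
    have "F \<midarrow>0\<rightarrow> 1" using c0 one by (simp add: isCont_def)
    then have "eventually (\<lambda>x. q < F x) (at 0)" using q by (intro order_tendstoD(1)) auto
    then obtain dd where dd: "dd > 0" "\<forall>x. x \<noteq> 0 \<and> dist x 0 < dd \<longrightarrow> q < F x"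
      unfolding eventually_at by auto
    define a where "a = dd/2"
    have a: "0 < a" "q < F a" using dd unfolding a_def by (auto simp: dist_real_def)
    have "eventually (\<lambda>x. F x < q) at_top" using lim q by (intro order_tendstoD(2)) auto
    then obtain N where N: "\<forall>x\<ge>N. F x < q" unfolding eventually_at_top_linorder by auto
    define b where "b = max N (a+1)"
    have b: "a \<le> b" "F b < q" using N unfolding b_def by auto
    have "\<forall>x. a \<le> x \<and> x \<le> b \<longrightarrow> isCont F x" using cont a by auto
    then have "\<exists>x. a \<le> x \<and> x \<le> b \<and> F x = q" using IVT2[of F b q a] b a by auto
    then obtain x where "a \<le> x" "x \<le> b" "F x = q" by blast
    then show "\<exists>x>0. F x = q" using a(1) by (intro exI[of _ x]) auto
  qed
qed

lemma h_props:
  assumes "domination_function h" and "\<forall>p\<in>{0<..<1}. deriv h p > 0"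
  shows h_der: "\<And>p. 0 < p \<Longrightarrow> p < 1 \<Longrightarrow> (h has_real_derivative deriv h p) (at p)"
    and h_rng: "\<And>p. 0 < p \<Longrightarrow> p < 1 \<Longrightarrow> 0 < h p \<and> h p < 1"
proof -
  have c: "continuous_on {0..1} h" and h0: "h 0 = 0" and h1: "h 1 = 1"
    and d: "\<forall>p\<in>{0..1}. h differentiable (at p within {0..1})"
    using assms(1) unfolding domination_function_def by auto
  show der: "\<And>p. 0 < p \<Longrightarrow> p < 1 \<Longrightarrow> (h has_real_derivative deriv h p) (at p)"
  proof -
    fix p :: real assume p: "0 < p" "p < 1"
    have "at p within {0..1} = at p" using p by (intro at_within_interior) auto
    then have "h differentiable (at p)" using d p by (metis atLeastAtMost_iff less_eq_real_def)
    then show "(h has_real_derivative deriv h p) (at p)"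
      using DERIV_deriv_iff_real_differentiable by blast
  qed
  have inc: "\<And>p q. 0 \<le> p \<Longrightarrow> p < q \<Longrightarrow> q \<le> 1 \<Longrightarrow> h p < h q"
  proof -
    fix p q :: real assume pq: "0 \<le> p" "p < q" "q \<le> 1"
    show "h p < h q"
    proof (rule DERIV_pos_imp_increasing_open[OF pq(2)])
      fix x assume "p < x" "x < q"
      then have x: "0 < x" "x < 1" using pq by auto
      then have "DERIV h x :> deriv h x" "0 < deriv h x" using der assms(2) by auto
      then show "\<exists>y. DERIV h x :> y \<and> 0 < y" by blast
    next
      show "continuous_on {p..q} h" by (rule continuous_on_subset[OF c]) (use pq in auto)
    qed
  qed
  show "\<And>p. 0 < p \<Longrightarrow> p < 1 \<Longrightarrow> 0 < h p \<and> h p < 1"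
    using inc[of 0] inc[of _ 1] h0 h1 by force
qed

lemma pow_lt1:
  fixes t :: real
  assumes "0 < t" "t < 1"
  shows "0 < t ^ Suc m \<and> t ^ Suc m < 1"
proof -
  have "t ^ Suc m < 1" using assms by (rule power_Suc_less_one)
  then show ?thesis using assms by simp
qed

lemma equiv_mono:
  fixes F G :: "real \<Rightarrow> real"
  assumes dec: "\<And>x y. 0 < x \<Longrightarrow> x < y \<Longrightarrow> F y < F x"
    and rng: "\<And>x. 0 < x \<Longrightarrow> 0 < F x \<and> F x < 1"
    and surj: "\<And>q. 0 < q \<Longrightarrow> q < 1 \<Longrightarrow> \<exists>x>0. F x = q"
  shows "(\<forall>x y. 0 < x \<longrightarrow> x \<le> y \<longrightarrow> G (F x) \<le> G (F y)) \<longleftrightarrow>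
         (\<forall>p q. 0 < p \<longrightarrow> p \<le> q \<longrightarrow> q < 1 \<longrightarrow> G q \<le> G p)"
proof
  assume L: "\<forall>x y. 0 < x \<longrightarrow> x \<le> y \<longrightarrow> G (F x) \<le> G (F y)"
  show "\<forall>p q. 0 < p \<longrightarrow> p \<le> q \<longrightarrow> q < 1 \<longrightarrow> G q \<le> G p"
  proof (intro allI impI)
    fix p q :: real assume pq: "0 < p" "p \<le> q" "q < 1"
    have "0 < q" using pq by simp
    then obtain x where x: "x > 0" "F x = q" using surj pq(3) by blast
    obtain y where y: "y > 0" "F y = p" using surj pq by fastforce
    have "x \<le> y"
    proof (rule ccontr)
      assume "\<not> x \<le> y"
      then have "F x < F y" using dec[of y x] y by simp
      then show False using x y pq by simp
    qed
    then show "G q \<le> G p" using L x y by metis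
  qed
next
  assume R: "\<forall>p q. 0 < p \<longrightarrow> p \<le> q \<longrightarrow> q < 1 \<longrightarrow> G q \<le> G p"
  show "\<forall>x y. 0 < x \<longrightarrow> x \<le> y \<longrightarrow> G (F x) \<le> G (F y)"
  proof (intro allI impI)
    fix x y :: real assume xy: "0 < x" "x \<le> y"
    have "F y \<le> F x" using dec[of x y] xy by (cases "x = y") auto
    then show "G (F x) \<le> G (F y)" using R rng[of x] rng[of y] xy by simp
  qed
qed

lemma ratio_alg:
  fixes K A d f D g B e :: real
  assumes "K \<noteq> 0" "f \<noteq> 0" "D \<noteq> 0" "g \<noteq> 0" "B \<noteq> 0" "e \<noteq> 0"
  shows "(- (K * A * (d * f)) / D) / (- (e * (K * B * f)) / g) = (A * d / D) * (g / (B * e))"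
  using assms by (simp add: field_simps)

lemma hazard_ratio:
  assumes F: "lifetime_survival F" and H: "domination_function h" and hp: "\<forall>p\<in>{0<..<1}. deriv h p > 0"
    and x: "0 < x"
  shows "hazard (surv_system_redundancy h m F) x / hazard (surv_component_redundancy h m F) x
           = ratio_expr h m (F x)"
    and "hazard (surv_component_redundancy h m F) x / hazard (surv_system_redundancy h m F) x
           = 1 / ratio_expr h m (F x)"
    and "ratio_expr h m (F x) > 0"
proof -
  define a where "a = F x"
  define f where "f = deriv F x"
  define G where "G = 1 - (1 - a) ^ (m + 1)"
  have Fd: "(F has_real_derivative f) (at x)" and f0: "f < 0"
    using F_der[OF F x] unfolding f_def by auto
  have a: "0 < a" "a < 1" using F_rng[OF F x] unfolding a_def by auto
  have ha: "0 < h a" "h a < 1" using h_rng[OF H hp a] by auto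
  have hda: "deriv h a > 0" using hp a by auto
  have G: "0 < G" "G < 1" using pow_lt1[of "1 - a" m] a unfolding G_def by auto
  have hG: "0 < h G" "h G < 1" using h_rng[OF H hp G] by auto
  have hdG: "deriv h G > 0" using hp G by auto
  have P1: "0 < (1 - h a) ^ (m+1)" "(1 - h a) ^ (m+1) < 1" using pow_lt1[of "1 - h a" m] ha by auto
  have P2: "0 < (1 - h a) ^ m" "0 < (1 - a) ^ m" using ha a by auto
  have hchain: "((\<lambda>x. h (F x)) has_real_derivative deriv h a * f) (at x)"
  proof -
    have hd: "(h has_real_derivative deriv h a) (at (F x))" using h_der[OF H hp a] unfolding a_def .
    show ?thesis using DERIV_chain2[OF hd Fd] .
  qed
  have dS: "((surv_system_redundancy h m F) has_real_derivative
             (real (m+1) * (1 - h a) ^ m * (deriv h a * f))) (at x)"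
    unfolding surv_system_redundancy_def[abs_def] a_def
    by (rule DERIV_cong, (rule derivative_intros hchain)+) (simp add: field_simps a_def)
  have inner: "((\<lambda>x. 1 - (1 - F x) ^ (m + 1)) has_real_derivative
             (real (m+1) * (1 - a) ^ m * f)) (at x)"
    unfolding a_def
    by (rule DERIV_cong, (rule derivative_intros Fd)+) (simp add: field_simps)
  have dC: "((surv_component_redundancy h m F) has_real_derivative
             (deriv h G * (real (m+1) * (1 - a) ^ m * f))) (at x)"
  proof -
    have hd: "(h has_real_derivative deriv h G) (at ((\<lambda>x. 1 - (1 - F x) ^ (m + 1)) x))"
      using h_der[OF H hp G] by (simp add: G_def a_def)
    have "((\<lambda>y. h ((\<lambda>x. 1 - (1 - F x) ^ (m + 1)) y)) has_real_derivative
             (deriv h G * (real (m+1) * (1 - a) ^ m * f))) (at x)"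
      by (rule DERIV_chain2[OF hd inner])
    then show ?thesis unfolding surv_component_redundancy_def[abs_def] by simp
  qed
  have hS: "hazard (surv_system_redundancy h m F) x =
      - (real (m+1) * (1 - h a) ^ m * (deriv h a * f)) / (1 - (1 - h a) ^ (m + 1))"
    unfolding hazard_def density_of_def DERIV_imp_deriv[OF dS]
    by (simp add: surv_system_redundancy_def a_def)
  have hC: "hazard (surv_component_redundancy h m F) x =
      - (deriv h G * (real (m+1) * (1 - a) ^ m * f)) / h G"
    unfolding hazard_def density_of_def DERIV_imp_deriv[OF dC]
    by (simp add: surv_component_redundancy_def a_def G_def)
  have R: "ratio_expr h m a = ((1 - h a) ^ m * deriv h a / (1 - (1 - h a) ^ (m + 1))) *
     (h G / ((1 - a) ^ m * deriv h G))"
    unfolding ratio_expr_def G_def ..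
  have pos: "ratio_expr h m a > 0" unfolding R using P1 P2 hda hdG hG
    by (intro mult_pos_pos divide_pos_pos) auto
  show "ratio_expr h m (F x) > 0" using pos a_def by simp
  have e1: "hazard (surv_system_redundancy h m F) x / hazard (surv_component_redundancy h m F) x
           = ratio_expr h m a"
    unfolding hS hC R
  proof (rule ratio_alg)
    show "real (m + 1) \<noteq> 0" by simp
    show "f \<noteq> 0" using f0 by simp
    show "1 - (1 - h a) ^ (m + 1) \<noteq> 0" using P1 by linarith
    show "h G \<noteq> 0" using hG by linarith
    show "(1 - a) ^ m \<noteq> 0" using P2 by linarith
    show "deriv h G \<noteq> 0" using hdG by linarith
  qed
  show "hazard (surv_system_redundancy h m F) x / hazard (surv_component_redundancy h m F) x
           = ratio_expr h m (F x)" using e1 a_def by simp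
  show "hazard (surv_component_redundancy h m F) x / hazard (surv_system_redundancy h m F) x
           = 1 / ratio_expr h m (F x)" using e1 a_def by (metis inverse_divide inverse_eq_divide)
qed

theorem theorem4p1:
  fixes F h :: "real \<Rightarrow> real" and m :: nat
  assumes "lifetime_survival F"
    and "domination_function h"
    and "\<forall>p\<in>{0<..<1}. deriv h p > 0"
  shows "(c_less (surv_system_redundancy h m F) (surv_component_redundancy h m F) \<longleftrightarrow>
            (\<forall>p q. 0 < p \<longrightarrow> p \<le> q \<longrightarrow> q < 1 \<longrightarrow> ratio_expr h m q \<le> ratio_expr h m p))
       \<and> (c_less (surv_component_redundancy h m F) (surv_system_redundancy h m F) \<longleftrightarrow>
            (\<forall>p q. 0 < p \<longrightarrow> p \<le> q \<longrightarrow> q < 1 \<longrightarrow> ratio_expr h m p \<le> ratio_expr h m q))"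
proof
  note HR = hazard_ratio[OF assms]
  note EQ = equiv_mono[OF F_dec[OF assms(1)] F_rng[OF assms(1)] F_surj[OF assms(1)]]
  have Rpos: "\<And>p. 0 < p \<Longrightarrow> p < 1 \<Longrightarrow> ratio_expr h m p > 0"
  proof -
    fix p :: real assume "0 < p" "p < 1"
    then obtain x where "x > 0" "F x = p" using F_surj[OF assms(1)] by blast
    then show "ratio_expr h m p > 0" using HR(3) by blast
  qed
  have "c_less (surv_system_redundancy h m F) (surv_component_redundancy h m F) \<longleftrightarrow>
     (\<forall>x y. 0 < x \<longrightarrow> x \<le> y \<longrightarrow> ratio_expr h m (F x) \<le> ratio_expr h m (F y))"
  proof -
    have "\<And>x y. 0 < x \<Longrightarrow> x \<le> y \<Longrightarrow>
      (hazard (surv_system_redundancy h m F) x / hazard (surv_component_redundancy h m F) x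
        \<le> hazard (surv_system_redundancy h m F) y / hazard (surv_component_redundancy h m F) y)
      \<longleftrightarrow> ratio_expr h m (F x) \<le> ratio_expr h m (F y)"
    proof -
      fix x y :: real assume xy: "0 < x" "x \<le> y"
      then have "0 < y" by simp
      then show "?thesis x y" using HR(1)[of x] HR(1)[of y] xy(1) by simp
    qed
    then show ?thesis unfolding c_less_def by blast
  qed
  also have "\<dots> \<longleftrightarrow> (\<forall>p q. 0 < p \<longrightarrow> p \<le> q \<longrightarrow> q < 1 \<longrightarrow> ratio_expr h m q \<le> ratio_expr h m p)"
    by (rule EQ)
  finally show "c_less (surv_system_redundancy h m F) (surv_component_redundancy h m F) \<longleftrightarrow>
            (\<forall>p q. 0 < p \<longrightarrow> p \<le> q \<longrightarrow> q < 1 \<longrightarrow> ratio_expr h m q \<le> ratio_expr h m p)" .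
  have "c_less (surv_component_redundancy h m F) (surv_system_redundancy h m F) \<longleftrightarrow>
     (\<forall>x y. 0 < x \<longrightarrow> x \<le> y \<longrightarrow> 1 / ratio_expr h m (F x) \<le> 1 / ratio_expr h m (F y))"
  proof -
    have "\<And>x y. 0 < x \<Longrightarrow> x \<le> y \<Longrightarrow>
      (hazard (surv_component_redundancy h m F) x / hazard (surv_system_redundancy h m F) x
        \<le> hazard (surv_component_redundancy h m F) y / hazard (surv_system_redundancy h m F) y)
      \<longleftrightarrow> 1 / ratio_expr h m (F x) \<le> 1 / ratio_expr h m (F y)"
    proof -
      fix x y :: real assume xy: "0 < x" "x \<le> y"
      then have "0 < y" by simp
      then show "?thesis x y" using HR(2)[of x] HR(2)[of y] xy(1) by simp
    qed
    then show ?thesis unfolding c_less_def by blast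
  qed
  also have "\<dots> \<longleftrightarrow> (\<forall>p q. 0 < p \<longrightarrow> p \<le> q \<longrightarrow> q < 1 \<longrightarrow> 1 / ratio_expr h m q \<le> 1 / ratio_expr h m p)"
    by (rule EQ)
  also have "\<dots> \<longleftrightarrow> (\<forall>p q. 0 < p \<longrightarrow> p \<le> q \<longrightarrow> q < 1 \<longrightarrow> ratio_expr h m p \<le> ratio_expr h m q)"
  proof -
    have "\<And>p q. 0 < p \<Longrightarrow> p \<le> q \<Longrightarrow> q < 1 \<Longrightarrow>
       (1 / ratio_expr h m q \<le> 1 / ratio_expr h m p) \<longleftrightarrow> ratio_expr h m p \<le> ratio_expr h m q"
    proof -
      fix p q :: real assume pq: "0 < p" "p \<le> q" "q < 1"
      have "ratio_expr h m p > 0" "ratio_expr h m q > 0" using Rpos pq by auto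
      then show "(1 / ratio_expr h m q \<le> 1 / ratio_expr h m p) \<longleftrightarrow> ratio_expr h m p \<le> ratio_expr h m q"
        by (simp add: divide_inverse)
    qed
    then show ?thesis by blast
  qed
  finally show "c_less (surv_component_redundancy h m F) (surv_system_redundancy h m F) \<longleftrightarrow>
            (\<forall>p q. 0 < p \<longrightarrow> p \<le> q \<longrightarrow> q < 1 \<longrightarrow> ratio_expr h m p \<le> ratio_expr h m q)" .
qed

end
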